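(* Let $\theta:\Omega A\to\Omega B$ be a map of differential graded algebras, $M$ a right $A$-module, $\nabla_0:\mathrm{Hom}_A(\Omega^1A,M)\to M$ a hom-connection with curvature $F$, and let $\nabla_0^\theta:\mathrm{Hom}_B(\Omega^1B,\mathrm{Hom}_A(B,M))\to\mathrm{Hom}_A(B,M)$ be the induced hom-connection, $\nabla_0^\theta(f)(b)=\nabla_0(f\circ\ell_b\circ\theta)-f(db)$ (with $f\in\mathrm{Hom}_A(\Omega^1B,M)$, $\ell_b(\omega)=b\omega$), with curvature $F^\theta$. Then for all $f\in\mathrm{Hom}_B(\Omega^2B,\mathrm{Hom}_A(B,M))\cong\mathrm{Hom}_A(\Omega^2B,M)$ and all $b\in B$, $$F^\theta(f)(b)=F(fb\circ\theta),$$ where $fb\in\mathrm{Hom}_A(\Omega^2B,M)$ is $\omega\mapsto f(b\omega)$ and $fb\circ\theta$ is restricted to $\Omega^2A$. In particular, if $\nabla_0$ is flat, then so is $\nabla_0^\theta$.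
   Context: All algebras are associative and unital over a field $k$. A differential graded algebra $\Omega A=\bigoplus_{n\ge0}\Omega^nA$ over $A=\Omega^0A$ has a degree-one differential $d$, $d^2=0$, with the graded Leibniz rule; a map of differential graded algebras is a degree-preserving unital algebra map commuting with $d$. $B$ and all $\Omega^nB$ are $A$-bimodules via $\theta$. $\mathrm{Hom}_A$ denotes right $A$-linear maps; $\mathrm{Hom}_A(B,M)$ is a right $B$-module by $(gb)(b')=g(bb')$, and $\mathrm{Hom}_B(\Omega^nB,\mathrm{Hom}_A(B,M))\cong\mathrm{Hom}_A(\Omega^nB,M)$ via $f\mapsto(\omega\mapsto f(\omega)(1))$. For a right $A$-module $P$, $\mathrm{Hom}_A(\Omega^1A,P)$ is a right $A$-module via $(fa)(\omega)=f(a\omega)$, and a hom-connection on $P$ is a $k$-linear $\nabla_0:\mathrm{Hom}_A(\Omega^1A,P)\to P$ with $\nabla_0(fa)=\nabla_0(f)a+f(da)$ (analogously over $\Omega B$). For $\omega\in\Omega^nA$ and $f\in\mathrm{Hom}_A(\Omega^{n+m}A,P)$, $(f\omega)(\omega')=f(\omega\omega')$. Given a hom-connection $\nabla_0$, its extension $\nabla_1:\mathrm{Hom}_A(\Omega^2A,P)\to\mathrm{Hom}_A(\Omega^1A,P)$ is $\nabla_1(f)(\omega)=\nabla_0(f\omega)+f(d\omega)$, its curvature is $F=\nabla_0\circ\nabla_1$ (identifying $\mathrm{Hom}_A(A,P)\cong P$), and it is flat if $F=0$; the same definitions apply over $\Omega B$ to $\nabla_0^\theta$. *)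

theory Defs
  imports Main "HOL-Library.Function_Algebras"
begin

text \<open>A differential graded algebra over a field k is modelled by a ring_1 type 'a (the total
algebra, the direct sum of the graded pieces), a grading (grade D n = Omega^n), a differential
and the structure map k -> Omega^0 (central unital ring map) giving the k-algebra structure.\<close>

record ('k, 'a) dga =
  grade :: "nat \<Rightarrow> 'a set"
  dif   :: "'a \<Rightarrow> 'a"
  sc    :: "'k \<Rightarrow> 'a"

definition is_dga :: "('k::field, 'a::ring_1) dga \<Rightarrow> bool" where
  "is_dga D \<longleftrightarrow>
     (\<forall>n. 0 \<in> grade D n \<and> (\<forall>x\<in>grade D n. \<forall>y\<in>grade D n. x + y \<in> grade D n \<and> - x \<in> grade D n)) \<and>
     (\<forall>m n. \<forall>x\<in>grade D m. \<forall>y\<in>grade D n. x * y \<in> grade D (m + n)) \<and>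
     1 \<in> grade D 0 \<and>
     (\<forall>x. \<exists>!g. (\<forall>n. g n \<in> grade D n) \<and> finite {n. g n \<noteq> 0} \<and> x = (\<Sum>n | g n \<noteq> 0. g n)) \<and>
     (\<forall>c. sc D c \<in> grade D 0) \<and>
     (\<forall>c c'. sc D (c + c') = sc D c + sc D c' \<and> sc D (c * c') = sc D c * sc D c') \<and>
     sc D 1 = 1 \<and>
     (\<forall>c x. sc D c * x = x * sc D c) \<and>
     (\<forall>x y. dif D (x + y) = dif D x + dif D y) \<and>
     (\<forall>c x. dif D (sc D c * x) = sc D c * dif D x) \<and>
     (\<forall>n. \<forall>x\<in>grade D n. dif D x \<in> grade D (Suc n)) \<and>
     (\<forall>x. dif D (dif D x) = 0) \<and>
     (\<forall>m. \<forall>x\<in>grade D m. \<forall>y. dif D (x * y) = dif D x * y + (- 1) ^ m * x * dif D y)"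

definition is_dga_map :: "('k::field, 'a::ring_1) dga \<Rightarrow> ('k, 'b::ring_1) dga \<Rightarrow> ('a \<Rightarrow> 'b) \<Rightarrow> bool" where
  "is_dga_map DA DB \<theta> \<longleftrightarrow>
     (\<forall>x y. \<theta> (x + y) = \<theta> x + \<theta> y \<and> \<theta> (x * y) = \<theta> x * \<theta> y) \<and>
     \<theta> 1 = 1 \<and>
     (\<forall>c. \<theta> (sc DA c) = sc DB c) \<and>
     (\<forall>n. \<theta> ` grade DA n \<subseteq> grade DB n) \<and>
     (\<forall>x. \<theta> (dif DA x) = dif DB (\<theta> x))"

definition is_rmod :: "('k, 'a::ring_1) dga \<Rightarrow> 'p::ab_group_add set \<Rightarrow> ('p \<Rightarrow> 'a \<Rightarrow> 'p) \<Rightarrow> bool" where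
  "is_rmod D P act \<longleftrightarrow>
     0 \<in> P \<and> (\<forall>p\<in>P. \<forall>q\<in>P. p + q \<in> P \<and> - p \<in> P) \<and>
     (\<forall>p\<in>P. \<forall>a\<in>grade D 0. act p a \<in> P) \<and>
     (\<forall>p\<in>P. act p 1 = p) \<and>
     (\<forall>p\<in>P. \<forall>a\<in>grade D 0. \<forall>a'\<in>grade D 0. act (act p a) a' = act p (a * a')) \<and>
     (\<forall>p\<in>P. \<forall>q\<in>P. \<forall>a\<in>grade D 0. act (p + q) a = act p a + act q a) \<and>
     (\<forall>p\<in>P. \<forall>a\<in>grade D 0. \<forall>a'\<in>grade D 0. act p (a + a') = act p a + act p a')"

text \<open>Hom_A(Omega^n, P): right A-linear maps, represented extensionally (zero off Omega^n).\<close>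

definition hom :: "('k, 'a::ring_1) dga \<Rightarrow> 'p::ab_group_add set \<Rightarrow> ('p \<Rightarrow> 'a \<Rightarrow> 'p) \<Rightarrow> nat \<Rightarrow> ('a \<Rightarrow> 'p) set" where
  "hom D P act n = {f. (\<forall>x. x \<notin> grade D n \<longrightarrow> f x = 0) \<and> (\<forall>x\<in>grade D n. f x \<in> P) \<and>
     (\<forall>x\<in>grade D n. \<forall>y\<in>grade D n. f (x + y) = f x + f y) \<and>
     (\<forall>x\<in>grade D n. \<forall>a\<in>grade D 0. f (x * a) = act (f x) a)}"

text \<open>For omega and f in Hom(Omega^(n+m),P): (f omega)(omega') = f(omega omega'), an element of Hom(Omega^m,P).
In particular f a (a in A) is the right A-action on Hom(Omega^1,P).\<close>

definition homlmul :: "('k, 'a::ring_1) dga \<Rightarrow> nat \<Rightarrow> ('a \<Rightarrow> 'p::zero) \<Rightarrow> 'a \<Rightarrow> ('a \<Rightarrow> 'p)" where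
  "homlmul D m f \<omega> = (\<lambda>\<omega>'. if \<omega>' \<in> grade D m then f (\<omega> * \<omega>') else 0)"

definition is_hom_conn :: "('k, 'a::ring_1) dga \<Rightarrow> 'p::ab_group_add set \<Rightarrow> ('p \<Rightarrow> 'a \<Rightarrow> 'p) \<Rightarrow> (('a \<Rightarrow> 'p) \<Rightarrow> 'p) \<Rightarrow> bool" where
  "is_hom_conn D P act nabla \<longleftrightarrow>
     (\<forall>f\<in>hom D P act 1. nabla f \<in> P) \<and>
     (\<forall>f\<in>hom D P act 1. \<forall>g\<in>hom D P act 1. nabla (f + g) = nabla f + nabla g) \<and>
     (\<forall>f\<in>hom D P act 1. \<forall>c. nabla (homlmul D 1 f (sc D c)) = act (nabla f) (sc D c)) \<and>
     (\<forall>f\<in>hom D P act 1. \<forall>a\<in>grade D 0. nabla (homlmul D 1 f a) = act (nabla f) a + f (dif D a))"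

definition nabla1 :: "('k, 'a::ring_1) dga \<Rightarrow> (('a \<Rightarrow> 'p::ab_group_add) \<Rightarrow> 'p) \<Rightarrow> ('a \<Rightarrow> 'p) \<Rightarrow> ('a \<Rightarrow> 'p)" where
  "nabla1 D nabla f = (\<lambda>\<omega>. if \<omega> \<in> grade D 1 then nabla (homlmul D 1 f \<omega>) + f (dif D \<omega>) else 0)"

definition curvature :: "('k, 'a::ring_1) dga \<Rightarrow> (('a \<Rightarrow> 'p::ab_group_add) \<Rightarrow> 'p) \<Rightarrow> ('a \<Rightarrow> 'p) \<Rightarrow> 'p" where
  "curvature D nabla f = nabla (nabla1 D nabla f)"

definition flat :: "('k, 'a::ring_1) dga \<Rightarrow> 'p::ab_group_add set \<Rightarrow> ('p \<Rightarrow> 'a \<Rightarrow> 'p) \<Rightarrow> (('a \<Rightarrow> 'p) \<Rightarrow> 'p) \<Rightarrow> bool" where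
  "flat D P act nabla \<longleftrightarrow> (\<forall>f\<in>hom D P act 2. curvature D nabla f = 0)"

definition homAB :: "('k, 'a::ring_1) dga \<Rightarrow> ('k, 'b::ring_1) dga \<Rightarrow> ('a \<Rightarrow> 'b) \<Rightarrow> 'm::ab_group_add set \<Rightarrow> ('m \<Rightarrow> 'a \<Rightarrow> 'm) \<Rightarrow> ('b \<Rightarrow> 'm) set" where
  "homAB DA DB \<theta> M actM = {g. (\<forall>b. b \<notin> grade DB 0 \<longrightarrow> g b = 0) \<and> (\<forall>b\<in>grade DB 0. g b \<in> M) \<and>
     (\<forall>b\<in>grade DB 0. \<forall>b'\<in>grade DB 0. g (b + b') = g b + g b') \<and>
     (\<forall>b\<in>grade DB 0. \<forall>a\<in>grade DA 0. g (b * \<theta> a) = actM (g b) a)}"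

definition actAB :: "('k, 'b::ring_1) dga \<Rightarrow> ('b \<Rightarrow> 'm::zero) \<Rightarrow> 'b \<Rightarrow> ('b \<Rightarrow> 'm)" where
  "actAB DB g b = (\<lambda>b'. if b' \<in> grade DB 0 then g (b * b') else 0)"

text \<open>Induced hom-connection: nabla^theta(f)(b) = nabla(f o l_b o theta) - f(db), where f in
Hom_B(Omega^1 B, Hom_A(B,M)) is identified with omega |-> f(omega)(1) in Hom_A(Omega^1 B, M).\<close>

definition induced_conn :: "('k, 'a::ring_1) dga \<Rightarrow> ('k, 'b::ring_1) dga \<Rightarrow> ('a \<Rightarrow> 'b) \<Rightarrow>
    (('a \<Rightarrow> 'm::ab_group_add) \<Rightarrow> 'm) \<Rightarrow> ('b \<Rightarrow> ('b \<Rightarrow> 'm)) \<Rightarrow> ('b \<Rightarrow> 'm)" where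
  "induced_conn DA DB \<theta> nabla f = (\<lambda>b. if b \<in> grade DB 0 then
       nabla (\<lambda>\<omega>. if \<omega> \<in> grade DA 1 then f (b * \<theta> \<omega>) 1 else 0) - f (dif DB b) 1
     else 0)"

end

theory Submission
  imports Defs
begin

lemma dgaF:
  assumes "is_dga D"
  shows "0 \<in> grade D n" "x \<in> grade D n \<Longrightarrow> y \<in> grade D n \<Longrightarrow> x + y \<in> grade D n"
    "x \<in> grade D n \<Longrightarrow> - x \<in> grade D n"
    "x \<in> grade D m \<Longrightarrow> y \<in> grade D n \<Longrightarrow> x * y \<in> grade D (m + n)"
    "1 \<in> grade D 0"
    "dif D (x + y) = dif D x + dif D y"
    "x \<in> grade D n \<Longrightarrow> dif D x \<in> grade D (Suc n)"
    "dif D (dif D x) = 0"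
    "x \<in> grade D m \<Longrightarrow> dif D (x * y) = dif D x * y + (- 1) ^ m * x * dif D y"
  using assms unfolding is_dga_def by (simp_all add: Ball_def)

lemma dga_d1: assumes "is_dga D" shows "dif D 1 = 0"
proof -
  have "dif D (1 * 1) = dif D 1 * 1 + (- 1) ^ 0 * 1 * dif D 1"
    using dgaF(9)[OF assms dgaF(5)[OF assms]] by blast
  then show ?thesis by simp
qed

lemma homF:
  assumes "f \<in> hom D P act n"
  shows "x \<notin> grade D n \<Longrightarrow> f x = 0" "x \<in> grade D n \<Longrightarrow> f x \<in> P"
    "x \<in> grade D n \<Longrightarrow> y \<in> grade D n \<Longrightarrow> f (x + y) = f x + f y"
    "x \<in> grade D n \<Longrightarrow> a \<in> grade D 0 \<Longrightarrow> f (x * a) = act (f x) a"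
  using assms unfolding hom_def by (simp_all add: Ball_def)

lemma hom_zero: assumes "is_dga D" "f \<in> hom D P act n" shows "f 0 = 0"
proof -
  have "f (0 + 0) = f 0 + f 0" using homF(3)[OF assms(2)] dgaF(1)[OF assms(1)] by blast
  then show ?thesis by simp
qed

lemma hom_neg: assumes "is_dga D" "f \<in> hom D P act n" "x \<in> grade D n" shows "f (- x) = - f x"
proof -
  have "f (x + - x) = f x + f (- x)" using homF(3)[OF assms(2)] dgaF(3)[OF assms(1)] assms(3) by blast
  then have "0 = f x + f (-x)" using hom_zero[OF assms(1,2)] by simp
  then show ?thesis by (simp add: eq_neg_iff_add_eq_0 add.commute)
qed

lemma rmodF:
  assumes "is_rmod D P act"
  shows "p \<in> P \<Longrightarrow> q \<in> P \<Longrightarrow> p + q \<in> P"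
    "p \<in> P \<Longrightarrow> q \<in> P \<Longrightarrow> a \<in> grade D 0 \<Longrightarrow> act (p + q) a = act p a + act q a"
  using assms unfolding is_rmod_def by (simp_all add: Ball_def)

lemma hcF:
  assumes "is_hom_conn D P act nabla"
  shows "f \<in> hom D P act 1 \<Longrightarrow> nabla f \<in> P"
    "f \<in> hom D P act 1 \<Longrightarrow> g \<in> hom D P act 1 \<Longrightarrow> nabla (f + g) = nabla f + nabla g"
    "f \<in> hom D P act 1 \<Longrightarrow> a \<in> grade D 0 \<Longrightarrow> nabla (homlmul D 1 f a) = act (nabla f) a + f (dif D a)"
  using assms unfolding is_hom_conn_def by (simp_all add: Ball_def)

lemma homlmul_hom:
  assumes D: "is_dga D" and k: "k \<in> hom D P act 2" and w: "w \<in> grade D 1"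
  shows "homlmul D 1 k w \<in> hom D P act 1"
proof -
  have m: "x \<in> grade D 1 \<Longrightarrow> w * x \<in> grade D 2" for x using dgaF(4)[OF D w, of x 1] by (simp add: numeral_2_eq_2)
  show ?thesis unfolding hom_def homlmul_def
  proof (intro CollectI conjI ballI allI impI)
    fix x assume "x \<in> grade D 1" then show "(if x \<in> grade D 1 then k (w * x) else 0) \<in> P"
      using m homF(2)[OF k] by simp
  next
    fix x y assume x: "x \<in> grade D 1" and y: "y \<in> grade D 1"
    show "(if x + y \<in> grade D 1 then k (w * (x + y)) else 0) =
         (if x \<in> grade D 1 then k (w * x) else 0) + (if y \<in> grade D 1 then k (w * y) else 0)"
      using x y m dgaF(2)[OF D x y] homF(3)[OF k] by (simp add: distrib_left)
  next
    fix x a assume x: "x \<in> grade D 1" and a: "a \<in> grade D 0"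
    have xa: "x * a \<in> grade D 1" using dgaF(4)[OF D x a] by simp
    show "(if x * a \<in> grade D 1 then k (w * (x * a)) else 0) = act (if x \<in> grade D 1 then k (w * x) else 0) a"
      using x xa m homF(4)[OF k m[OF x] a] by (simp add: mult.assoc)
  qed auto
qed

lemma nabla1_hom:
  assumes D: "is_dga D" and R: "is_rmod D P act" and H: "is_hom_conn D P act nabla"
    and k: "k \<in> hom D P act 2"
  shows "nabla1 D nabla k \<in> hom D P act 1"
  unfolding hom_def nabla1_def
proof (intro CollectI conjI ballI allI impI)
  fix x assume x: "x \<in> grade D 1"
  have "dif D x \<in> grade D 2" using dgaF(7)[OF D x] by (simp add: numeral_2_eq_2)
  then show "(if x \<in> grade D 1 then nabla (homlmul D 1 k x) + k (dif D x) else 0) \<in> P"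
    using x rmodF(1)[OF R] hcF(1)[OF H homlmul_hom[OF D k x]] homF(2)[OF k] by simp
next
  fix x y assume x: "x \<in> grade D 1" and y: "y \<in> grade D 1"
  have xy: "x + y \<in> grade D 1" using dgaF(2)[OF D x y] .
  have dx: "dif D x \<in> grade D 2" "dif D y \<in> grade D 2"
    using dgaF(7)[OF D x] dgaF(7)[OF D y] by (simp_all add: numeral_2_eq_2)
  have eq: "homlmul D 1 k (x + y) = homlmul D 1 k x + homlmul D 1 k y"
  proof
    fix z show "homlmul D 1 k (x + y) z = (homlmul D 1 k x + homlmul D 1 k y) z"
      unfolding homlmul_def plus_fun_def using dgaF(4)[OF D x, of z 1] dgaF(4)[OF D y, of z 1]
        homF(3)[OF k] by (simp add: distrib_right numeral_2_eq_2)
  qed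
  show "(if x + y \<in> grade D 1 then nabla (homlmul D 1 k (x + y)) + k (dif D (x + y)) else 0) =
       (if x \<in> grade D 1 then nabla (homlmul D 1 k x) + k (dif D x) else 0) +
       (if y \<in> grade D 1 then nabla (homlmul D 1 k y) + k (dif D y) else 0)"
    using x y xy eq hcF(2)[OF H homlmul_hom[OF D k x] homlmul_hom[OF D k y]]
      dgaF(6)[OF D] homF(3)[OF k dx] by (simp add: algebra_simps)
next
  fix x a assume x: "x \<in> grade D 1" and a: "a \<in> grade D 0"
  have xa: "x * a \<in> grade D 1" using dgaF(4)[OF D x a] by simp
  have dx: "dif D x \<in> grade D 2" using dgaF(7)[OF D x] by (simp add: numeral_2_eq_2)
  have da: "dif D a \<in> grade D 1" using dgaF(7)[OF D a] by simp
  have dxa: "dif D x * a \<in> grade D 2" using dgaF(4)[OF D dx a] by simp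
  have xda: "x * dif D a \<in> grade D 2" using dgaF(4)[OF D x da] by (simp add: numeral_2_eq_2)
  have d: "dif D (x * a) = dif D x * a + - (x * dif D a)" using dgaF(9)[OF D x] by simp
  have kd: "k (dif D (x * a)) = act (k (dif D x)) a - k (x * dif D a)"
    using d homF(3)[OF k dxa dgaF(3)[OF D xda]] hom_neg[OF D k xda] homF(4)[OF k dx a] by simp
  have eq: "homlmul D 1 k (x * a) = homlmul D 1 (homlmul D 1 k x) a"
  proof
    fix z show "homlmul D 1 k (x * a) z = homlmul D 1 (homlmul D 1 k x) a z"
      unfolding homlmul_def using dgaF(4)[OF D a, of z 1] by (simp add: mult.assoc)
  qed
  have N: "nabla (homlmul D 1 k (x * a)) = act (nabla (homlmul D 1 k x)) a + k (x * dif D a)"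
    unfolding eq hcF(3)[OF H homlmul_hom[OF D k x] a] using da by (simp add: homlmul_def)
  show "(if x * a \<in> grade D 1 then nabla (homlmul D 1 k (x * a)) + k (dif D (x * a)) else 0) =
       act (if x \<in> grade D 1 then nabla (homlmul D 1 k x) + k (dif D x) else 0) a"
    using x xa N kd rmodF(2)[OF R hcF(1)[OF H homlmul_hom[OF D k x]] homF(2)[OF k dx] a] by simp
qed auto

lemma mapF:
  assumes "is_dga_map DA DB \<theta>"
  shows "\<theta> (x + y) = \<theta> x + \<theta> y" "\<theta> (x * y) = \<theta> x * \<theta> y" "\<theta> 1 = 1"
    "x \<in> grade DA n \<Longrightarrow> \<theta> x \<in> grade DB n" "\<theta> (dif DA x) = dif DB (\<theta> x)"
  using assms unfolding is_dga_map_def by blast+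

lemma homABF:
  assumes "g \<in> homAB DA DB \<theta> M actM"
  shows "b \<in> grade DB 0 \<Longrightarrow> g b \<in> M"
    "b \<in> grade DB 0 \<Longrightarrow> b' \<in> grade DB 0 \<Longrightarrow> g (b + b') = g b + g b'"
    "b \<in> grade DB 0 \<Longrightarrow> a \<in> grade DA 0 \<Longrightarrow> g (b * \<theta> a) = actM (g b) a"
  using assms unfolding homAB_def by (simp_all add: Ball_def)

lemma restr_hom:
  assumes DA: "is_dga DA" and DB: "is_dga DB" and T: "is_dga_map DA DB \<theta>"
    and f: "f \<in> hom DB (homAB DA DB \<theta> M actM) (actAB DB) 2"
    and c: "c \<in> grade DB n" and nm: "n + m = 2"
  shows "(\<lambda>\<omega>. if \<omega> \<in> grade DA m then f (c * \<theta> \<omega>) 1 else 0) \<in> hom DA M actM m"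
  unfolding hom_def
proof (intro CollectI conjI ballI allI impI)
  have one: "1 \<in> grade DB 0" using dgaF(5)[OF DB] .
  have cm: "x \<in> grade DA m \<Longrightarrow> c * \<theta> x \<in> grade DB 2" for x
    using dgaF(4)[OF DB c mapF(4)[OF T]] nm by metis
  fix x assume x: "x \<in> grade DA m"
  show "(if x \<in> grade DA m then f (c * \<theta> x) 1 else 0) \<in> M"
    using x homABF(1)[OF homF(2)[OF f cm[OF x]] one] by simp
  {
    fix y assume y: "y \<in> grade DA m"
    show "(if x + y \<in> grade DA m then f (c * \<theta> (x + y)) 1 else 0) =
        (if x \<in> grade DA m then f (c * \<theta> x) 1 else 0) + (if y \<in> grade DA m then f (c * \<theta> y) 1 else 0)"
      using x y dgaF(2)[OF DA x y] homF(3)[OF f cm[OF x] cm[OF y]] mapF(1)[OF T]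
      by (simp add: distrib_left)
  }
  {
    fix a assume a: "a \<in> grade DA 0"
    have xa: "x * a \<in> grade DA m" using dgaF(4)[OF DA x a] by simp
    have ta: "\<theta> a \<in> grade DB 0" using mapF(4)[OF T a] .
    have "f (c * \<theta> (x * a)) 1 = f (c * \<theta> x * \<theta> a) 1" using mapF(2)[OF T] by (simp add: mult.assoc)
    also have "\<dots> = actAB DB (f (c * \<theta> x)) (\<theta> a) 1" using homF(4)[OF f cm[OF x] ta] by simp
    also have "\<dots> = f (c * \<theta> x) (1 * \<theta> a)" using one by (simp add: actAB_def)
    also have "\<dots> = actM (f (c * \<theta> x) 1) a" using homABF(3)[OF homF(2)[OF f cm[OF x]] one a] .
    finally show "(if x * a \<in> grade DA m then f (c * \<theta> (x * a)) 1 else 0) =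
        actM (if x \<in> grade DA m then f (c * \<theta> x) 1 else 0) a" using x xa by simp
  }
qed auto

lemma curv_pt:
  assumes DA: "is_dga DA" and DB: "is_dga DB" and T: "is_dga_map DA DB \<theta>"
    and R: "is_rmod DA M actM" and H: "is_hom_conn DA M actM nabla"
    and f: "f \<in> hom DB (homAB DA DB \<theta> M actM) (actAB DB) 2" and b: "b \<in> grade DB 0"
  shows "curvature DB (induced_conn DA DB \<theta> nabla) f b =
            curvature DA nabla (\<lambda>\<omega>. if \<omega> \<in> grade DA 2 then f (b * \<theta> \<omega>) 1 else 0)"
proof -
  define k where "k = (\<lambda>\<omega>. if \<omega> \<in> grade DA 2 then f (b * \<theta> \<omega>) 1 else 0)"
  define q where "q = (\<lambda>\<omega>. if \<omega> \<in> grade DA 1 then f (dif DB b * \<theta> \<omega>) 1 else 0)"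
  define ind where "ind = induced_conn DA DB \<theta> nabla"
  define g where "g = nabla1 DB ind f"
  have k: "k \<in> hom DA M actM 2" unfolding k_def using restr_hom[OF DA DB T f b] by simp
  have db: "dif DB b \<in> grade DB 1" using dgaF(7)[OF DB b] by simp
  have q: "q \<in> hom DA M actM 1" unfolding q_def using restr_hom[OF DA DB T f db] by simp
  have f0: "f 0 = 0" using hom_zero[OF DB f] .
  have d1: "dif DB 1 = 0" using dga_d1[OF DB] .
  have one: "1 \<in> grade DB 0" using dgaF(5)[OF DB] .
  have z1: "0 \<in> grade DB 1" using dgaF(1)[OF DB] .
  have indh: "ind (homlmul DB 1 f c) 1 = nabla (\<lambda>\<omega>'. if \<omega>' \<in> grade DA 1 then f (c * \<theta> \<omega>') 1 else 0)"
    if c: "c \<in> grade DB 1" for c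
  proof -
    have "(\<lambda>\<omega>'. if \<omega>' \<in> grade DA 1 then homlmul DB 1 f c (1 * \<theta> \<omega>') 1 else 0)
        = (\<lambda>\<omega>'. if \<omega>' \<in> grade DA 1 then f (c * \<theta> \<omega>') 1 else 0)"
      using mapF(4)[OF T] by (auto simp: homlmul_def)
    then show ?thesis unfolding ind_def induced_conn_def using one d1 z1 f0
      by (simp add: homlmul_def)
  qed
  have key: "(\<lambda>\<omega>. if \<omega> \<in> grade DA 1 then g (b * \<theta> \<omega>) 1 else 0) = nabla1 DA nabla k + q"
  proof
    fix w
    show "(if w \<in> grade DA 1 then g (b * \<theta> w) 1 else 0) = (nabla1 DA nabla k + q) w"
    proof (cases "w \<in> grade DA 1")
      case False then show ?thesis by (simp add: nabla1_def q_def)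
    next
      case w: True
      have tw: "\<theta> w \<in> grade DB 1" using mapF(4)[OF T w] .
      have btw: "b * \<theta> w \<in> grade DB 1" using dgaF(4)[OF DB b tw] by simp
      have dw: "dif DA w \<in> grade DA 2" using dgaF(7)[OF DA w] by (simp add: numeral_2_eq_2)
      have e1: "b * \<theta> (dif DA w) \<in> grade DB 2" using dgaF(4)[OF DB b mapF(4)[OF T dw]] by (simp add: numeral_2_eq_2)
      have e2: "dif DB b * \<theta> w \<in> grade DB 2" using dgaF(4)[OF DB db tw] by (simp add: numeral_2_eq_2)
      have dbtw: "dif DB (b * \<theta> w) = dif DB b * \<theta> w + b * \<theta> (dif DA w)"
        using dgaF(9)[OF DB b] mapF(5)[OF T] by simp
      have fd: "f (dif DB (b * \<theta> w)) 1 = f (dif DB b * \<theta> w) 1 + f (b * \<theta> (dif DA w)) 1"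
        unfolding dbtw homF(3)[OF f e2 e1] by simp
      have hl: "(\<lambda>\<omega>'. if \<omega>' \<in> grade DA 1 then f (b * \<theta> w * \<theta> \<omega>') 1 else 0) = homlmul DA 1 k w"
      proof
        fix z show "(if z \<in> grade DA 1 then f (b * \<theta> w * \<theta> z) 1 else 0) = homlmul DA 1 k w z"
          using dgaF(4)[OF DA w, of z 1] mapF(2)[OF T]
          by (auto simp: homlmul_def k_def numeral_2_eq_2 mult.assoc)
      qed
      have "g (b * \<theta> w) 1 = ind (homlmul DB 1 f (b * \<theta> w)) 1 + f (dif DB (b * \<theta> w)) 1"
        unfolding g_def nabla1_def using btw by simp
      also have "\<dots> = nabla (homlmul DA 1 k w) + f (dif DB b * \<theta> w) 1 + f (b * \<theta> (dif DA w)) 1"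
        unfolding indh[OF btw] hl fd by (simp add: add.assoc)
      also have "\<dots> = (nabla1 DA nabla k + q) w"
        using w dw by (simp add: nabla1_def q_def k_def algebra_simps)
      finally show ?thesis using w by simp
    qed
  qed
  have key2: "g (dif DB b) 1 = nabla q"
  proof -
    have "g (dif DB b) 1 = ind (homlmul DB 1 f (dif DB b)) 1 + f (dif DB (dif DB b)) 1"
      unfolding g_def nabla1_def using db by simp
    then show ?thesis unfolding indh[OF db] q_def dgaF(8)[OF DB] f0 by simp
  qed
  have "curvature DB ind f b = nabla (nabla1 DA nabla k + q) - nabla q"
    unfolding curvature_def g_def[symmetric] using b key key2
    by (simp add: ind_def induced_conn_def)
  also have "\<dots> = nabla (nabla1 DA nabla k)"
    using hcF(2)[OF H nabla1_hom[OF DA R H k] q] by simp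
  finally show ?thesis unfolding ind_def k_def curvature_def .
qed

theorem mainTheorem8:
  fixes DA :: "('k::field, 'a::ring_1) dga" and DB :: "('k, 'b::ring_1) dga"
    and \<theta> :: "'a \<Rightarrow> 'b" and M :: "'m::ab_group_add set" and actM :: "'m \<Rightarrow> 'a \<Rightarrow> 'm"
    and nabla :: "('a \<Rightarrow> 'm) \<Rightarrow> 'm"
  assumes "is_dga DA" and "is_dga DB" and "is_dga_map DA DB \<theta>"
    and "is_rmod DA M actM" and "is_hom_conn DA M actM nabla"
  shows "(\<forall>f\<in>hom DB (homAB DA DB \<theta> M actM) (actAB DB) 2. \<forall>b\<in>grade DB 0.
            curvature DB (induced_conn DA DB \<theta> nabla) f b =
            curvature DA nabla (\<lambda>\<omega>. if \<omega> \<in> grade DA 2 then f (b * \<theta> \<omega>) 1 else 0))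
       \<and> (flat DA M actM nabla \<longrightarrow>
            flat DB (homAB DA DB \<theta> M actM) (actAB DB) (induced_conn DA DB \<theta> nabla))"
proof (intro conjI ballI impI)
  fix f b assume f: "f \<in> hom DB (homAB DA DB \<theta> M actM) (actAB DB) 2" and b: "b \<in> grade DB 0"
  show "curvature DB (induced_conn DA DB \<theta> nabla) f b =
            curvature DA nabla (\<lambda>\<omega>. if \<omega> \<in> grade DA 2 then f (b * \<theta> \<omega>) 1 else 0)"
    using curv_pt[OF assms f b] .
next
  assume fl: "flat DA M actM nabla"
  show "flat DB (homAB DA DB \<theta> M actM) (actAB DB) (induced_conn DA DB \<theta> nabla)"
    unfolding flat_def
  proof
    fix f assume f: "f \<in> hom DB (homAB DA DB \<theta> M actM) (actAB DB) 2"
    show "curvature DB (induced_conn DA DB \<theta> nabla) f = 0"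
    proof
      fix b show "curvature DB (induced_conn DA DB \<theta> nabla) f b = 0 b"
      proof (cases "b \<in> grade DB 0")
        case True
        have "(\<lambda>\<omega>. if \<omega> \<in> grade DA 2 then f (b * \<theta> \<omega>) 1 else 0) \<in> hom DA M actM 2"
          using restr_hom[OF assms(1-3) f True] by simp
        then show ?thesis using curv_pt[OF assms f True] fl unfolding flat_def by simp
      next
        case False then show ?thesis by (simp add: curvature_def induced_conn_def)
      qed
    qed
  qed
qed

end
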